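(* In the sleeping multi-armed bandit setting, assume the losses are i.i.d.: $(\ell_t)_{t\ge1}$ are i.i.d. random vectors in $[0,1]^K$ with mean vector $\mu=(\mu_1,\dots,\mu_K)$, and for each $t$, $\ell_t$ is independent of everything determined before the learner observes $\ell_t(k_t)$ at round $t$ (in particular of $S_1,\dots,S_t$, of $\ell_1,\dots,\ell_{t-1}$, of $k_1,\dots,k_t$). Let the availability sets $(S_t)$ be arbitrary, where $S_t$ may depend only on $(\ell_s)_{s\le t-1}$ (and past play). Then for any learner (algorithm) and any ordering $\sigma$ of $[K]$, $$\mathbb E\big[R_T^{\mathrm{ordering}}(\sigma)\big]\le\sum_{i=1}^K\sum_{j\in D_i}\mathbb E\big[R_T^{\mathrm{int}}(i\to j)\big],$$ where $D_i=\{j\in[K]:\mu_j\le\mu_i\}$.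
   Context: Sleeping multi-armed bandit setting: $K$ arms $[K]=\{1,\dots,K\}$. At each round $t$ a nonempty availability set $S_t\subseteq[K]$ is revealed, the learner (possibly randomized, using only $S_1,\dots,S_t$, previously observed losses $\ell_s(k_s)$, $s<t$, and internal randomness) selects $k_t\in S_t$ and observes $\ell_t(k_t)$, where $\ell_t\in[0,1]^K$. Internal sleeping regret: $R_T^{\mathrm{int}}(i\to j)=\sum_{t=1}^T\big(\ell_t(k_t)-\ell_t(j)\big)\mathbf 1\{k_t=i,\ j\in S_t\}$ (equal to $0$ when $i=j$). An ordering is a permutation $\sigma=(\sigma_1,\dots,\sigma_K)$ of $[K]$; for nonempty $S\subseteq[K]$, $\sigma(S)=\sigma_m$ where $m=\min\{i:\sigma_i\in S\}$. Ordering regret: $R_T^{\mathrm{ordering}}(\sigma)=\sum_{t=1}^T\big(\ell_t(k_t)-\ell_t(\sigma(S_t))\big)$. *)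

theory Defs
  imports "HOL-Probability.Probability"
begin

text \<open>Arms are 1..K; rounds are 1..T. An ordering is a bijection sigma of {1..K};
  sigma_i is sigma i.\<close>

definition is_ordering :: "nat \<Rightarrow> (nat \<Rightarrow> nat) \<Rightarrow> bool" where
  "is_ordering K \<sigma> \<longleftrightarrow> bij_betw \<sigma> {1..K} {1..K}"

definition ord_sel :: "nat \<Rightarrow> (nat \<Rightarrow> nat) \<Rightarrow> nat set \<Rightarrow> nat" where
  "ord_sel K \<sigma> A = \<sigma> (LEAST i. i \<in> {1..K} \<and> \<sigma> i \<in> A)"

definition int_regret ::
  "(nat \<Rightarrow> 'w \<Rightarrow> nat \<Rightarrow> real) \<Rightarrow> (nat \<Rightarrow> 'w \<Rightarrow> nat set) \<Rightarrow> (nat \<Rightarrow> 'w \<Rightarrow> nat)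
    \<Rightarrow> nat \<Rightarrow> nat \<Rightarrow> nat \<Rightarrow> 'w \<Rightarrow> real" where
  "int_regret L S k T i j w =
     (\<Sum>t=1..T. (L t w (k t w) - L t w j) * (if k t w = i \<and> j \<in> S t w then 1 else 0))"

definition ordering_regret ::
  "nat \<Rightarrow> (nat \<Rightarrow> 'w \<Rightarrow> nat \<Rightarrow> real) \<Rightarrow> (nat \<Rightarrow> 'w \<Rightarrow> nat set) \<Rightarrow> (nat \<Rightarrow> 'w \<Rightarrow> nat)
    \<Rightarrow> nat \<Rightarrow> (nat \<Rightarrow> nat) \<Rightarrow> 'w \<Rightarrow> real" where
  "ordering_regret K L S k T \<sigma> w =
     (\<Sum>t=1..T. L t w (k t w) - L t w (ord_sel K \<sigma> (S t w)))"

definition loss_vec :: "nat \<Rightarrow> (nat \<Rightarrow> 'w \<Rightarrow> nat \<Rightarrow> real) \<Rightarrow> nat \<Rightarrow> 'w \<Rightarrow> (nat \<Rightarrow> real)" where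
  "loss_vec K L t w = restrict (L t w) {1..K}"

abbreviation loss_space :: "nat \<Rightarrow> (nat \<Rightarrow> real) measure" where
  "loss_space K \<equiv> Pi\<^sub>M {1..K} (\<lambda>_. borel)"

end

theory Submission
  imports Defs
begin

lemma sum_delta_real: "finite A \<Longrightarrow> x \<in> A \<Longrightarrow> (\<Sum>a\<in>A. f a * (if a = x then 1 else 0)) = (f x :: real)"
proof -
  assume "finite A" "x \<in> A"
  have "(\<Sum>a\<in>A. f a * (if a = x then 1 else 0)) = (\<Sum>a\<in>A. if a = x then f a else 0)"
    by (rule sum.cong) auto
  with \<open>finite A\<close> \<open>x \<in> A\<close> show ?thesis by (simp add: sum.delta)
qed

theorem lemma2:
  fixes M :: "'w measure" and F :: "nat \<Rightarrow> 'w measure"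
    and K T :: nat
    and L :: "nat \<Rightarrow> 'w \<Rightarrow> nat \<Rightarrow> real"
    and S :: "nat \<Rightarrow> 'w \<Rightarrow> nat set"
    and k :: "nat \<Rightarrow> 'w \<Rightarrow> nat"
    and \<mu> :: "nat \<Rightarrow> real"
    and \<sigma> :: "nat \<Rightarrow> nat"
  assumes prob: "prob_space M"
    and K_pos: "1 \<le> K"
    and loss_range: "\<And>t w j. 1 \<le> t \<Longrightarrow> w \<in> space M \<Longrightarrow> j \<in> {1..K} \<Longrightarrow> L t w j \<in> {0..1}"
    and loss_meas: "\<And>t j. 1 \<le> t \<Longrightarrow> j \<in> {1..K} \<Longrightarrow> (\<lambda>w. L t w j) \<in> borel_measurable M"
    and S_sub: "\<And>t w. 1 \<le> t \<Longrightarrow> w \<in> space M \<Longrightarrow> S t w \<subseteq> {1..K} \<and> S t w \<noteq> {}"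
    and k_in: "\<And>t w. 1 \<le> t \<Longrightarrow> w \<in> space M \<Longrightarrow> k t w \<in> S t w"
    and F_sub: "\<And>t. 1 \<le> t \<Longrightarrow> subalgebra M (F t)"
    and F_mono: "\<And>t. 1 \<le> t \<Longrightarrow> sets (F t) \<subseteq> sets (F (Suc t))"
    and S_adapt: "\<And>t. 1 \<le> t \<Longrightarrow> S t \<in> measurable (F t) (count_space UNIV)"
    and k_adapt: "\<And>t. 1 \<le> t \<Longrightarrow> k t \<in> measurable (F t) (count_space UNIV)"
    and past_losses: "\<And>s t j. 1 \<le> s \<Longrightarrow> s < t \<Longrightarrow> j \<in> {1..K} \<Longrightarrow>
                        (\<lambda>w. L s w j) \<in> borel_measurable (F t)"
    and indep: "\<And>t. 1 \<le> t \<Longrightarrow>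
                  prob_space.indep_set M
                    (sets (vimage_algebra (space M) (loss_vec K L t) (loss_space K))) (sets (F t))"
    and ident: "\<And>t. 1 \<le> t \<Longrightarrow>
                  distr M (loss_space K) (loss_vec K L t) = distr M (loss_space K) (loss_vec K L 1)"
    and mean: "\<And>j. j \<in> {1..K} \<Longrightarrow> \<mu> j = (\<integral>w. L 1 w j \<partial>M)"
    and ord: "is_ordering K \<sigma>"
  shows "(\<integral>w. ordering_regret K L S k T \<sigma> w \<partial>M)
           \<le> (\<Sum>i\<in>{1..K}. \<Sum>j\<in>{j\<in>{1..K}. \<mu> j \<le> \<mu> i}. (\<integral>w. int_regret L S k T i j w \<partial>M))"
proof -
  interpret prob_space M by (rule prob)
  have sp: "\<And>t. 1 \<le> t \<Longrightarrow> space (F t) = space M"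
    using F_sub unfolding subalgebra_def by auto
  have ss: "\<And>t. 1 \<le> t \<Longrightarrow> sets (F t) \<subseteq> sets M"
    using F_sub unfolding subalgebra_def by auto
  have Lint: "\<And>t a. 1 \<le> t \<Longrightarrow> a \<in> {1..K} \<Longrightarrow> integrable M (\<lambda>w. L t w a)"
  proof -
    fix t a :: nat assume t: "1 \<le> t" and a: "a \<in> {1..K}"
    show "integrable M (\<lambda>w. L t w a)"
      by (rule integrable_const_bound[where B=1]) (use loss_range[OF t _ a] loss_meas[OF t a] in auto)
  qed
  have lvm: "\<And>t. 1 \<le> t \<Longrightarrow> loss_vec K L t \<in> measurable M (loss_space K)"
    unfolding loss_vec_def by (rule measurable_restrict) (rule loss_meas, auto)
  have EL: "\<And>t a. 1 \<le> t \<Longrightarrow> a \<in> {1..K} \<Longrightarrow> (\<integral>w. L t w a \<partial>M) = \<mu> a"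
  proof -
    fix t a :: nat assume t: "1 \<le> t" and a: "a \<in> {1..K}"
    have cm: "(\<lambda>x. x a) \<in> borel_measurable (loss_space K)"
      using measurable_component_singleton[OF a, of "\<lambda>_. borel"] by simp
    have "\<And>s. 1 \<le> s \<Longrightarrow> (\<integral>w. L s w a \<partial>M) = (\<integral>x. x a \<partial>(distr M (loss_space K) (loss_vec K L s)))"
      using integral_distr[OF lvm cm] a by (auto simp: loss_vec_def)
    from this[OF t] this[of 1] ident[OF t] mean[OF a] show "(\<integral>w. L t w a \<partial>M) = \<mu> a" by simp
  qed
  have key: "\<And>t a A. 1 \<le> t \<Longrightarrow> a \<in> {1..K} \<Longrightarrow> A \<in> sets (F t) \<Longrightarrow>
      integrable M (\<lambda>w. L t w a * indicator A w) \<and> (\<integral>w. L t w a * indicator A w \<partial>M) = \<mu> a * prob A"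
  proof -
    fix t a :: nat and A assume t: "1 \<le> t" and a: "a \<in> {1..K}" and A: "A \<in> sets (F t)"
    have AM: "A \<in> sets M" using ss[OF t] A by auto
    have Ym: "(indicator A :: 'w \<Rightarrow> real) \<in> borel_measurable (F t)" using A by simp
    have YmM: "(indicator A :: 'w \<Rightarrow> real) \<in> borel_measurable M" using AM by simp
    have Xm: "(\<lambda>w. L t w a) \<in> borel_measurable M" by (rule loss_meas[OF t a])
    let ?V = "vimage_algebra (space M) (loss_vec K L t) (loss_space K)"
    have gen1: "{(\<lambda>w. L t w a) -` B \<inter> space M | B. B \<in> sets borel} \<subseteq> sets ?V"
    proof safe
      fix B :: "real set" assume B: "B \<in> sets borel"
      let ?C = "(\<lambda>x. x a) -` B \<inter> space (loss_space K)"
      have C: "?C \<in> sets (loss_space K)"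
        using measurable_sets[OF measurable_component_singleton[OF a, of "\<lambda>_. borel"] B] by simp
      have "loss_vec K L t -` ?C \<inter> space M = (\<lambda>w. L t w a) -` B \<inter> space M"
        using measurable_space[OF lvm[OF t]] a by (auto simp: loss_vec_def)
      with in_vimage_algebra[OF C, of "loss_vec K L t" "space M"]
      show "(\<lambda>w. L t w a) -` B \<inter> space M \<in> sets ?V" by simp
    qed
    have gen2: "{(indicator A :: 'w \<Rightarrow> real) -` B \<inter> space M | B. B \<in> sets borel} \<subseteq> sets (F t)"
      using measurable_sets[OF Ym] sp[OF t] by auto
    have s1: "sigma_sets (space M) {(\<lambda>w. L t w a) -` B \<inter> space M | B. B \<in> sets borel} \<subseteq> sets ?V"
      using sets.sigma_sets_subset[OF gen1] by simp
    have s2: "sigma_sets (space M) {(indicator A :: 'w \<Rightarrow> real) -` B \<inter> space M | B. B \<in> sets borel} \<subseteq> sets (F t)"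
      using sets.sigma_sets_subset[OF gen2] sp[OF t] by simp
    have ind: "indep_var borel (\<lambda>w. L t w a) borel (indicator A :: 'w \<Rightarrow> real)"
      unfolding indep_var_eq
    proof (intro conjI Xm YmM)
      show "indep_set (sigma_sets (space M) {(\<lambda>w. L t w a) -` B \<inter> space M | B. B \<in> sets borel})
         (sigma_sets (space M) {(indicator A :: 'w \<Rightarrow> real) -` B \<inter> space M | B. B \<in> sets borel})"
        using indep[OF t] s1 s2 unfolding indep_set_def
        by (rule_tac indep_sets_mono_sets) (auto split: bool.split)
    qed
    have iA: "integrable M (indicator A :: 'w \<Rightarrow> real)" using AM by (simp add: emeasure_eq_measure)
    show "integrable M (\<lambda>w. L t w a * indicator A w) \<and> (\<integral>w. L t w a * indicator A w \<partial>M) = \<mu> a * prob A"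
      using indep_var_lebesgue_integral[OF ind Lint[OF t a] iA] indep_var_integrable[OF ind Lint[OF t a] iA]
        EL[OF t a] AM by simp
  qed
  define os where "os t w = ord_sel K \<sigma> (S t w)" for t w
  define kA where "kA t a = {w\<in>space M. k t w = a}" for t a
  define oA where "oA t a = {w\<in>space M. os t w = a}" for t a
  define B where "B t i j = {w\<in>space M. k t w = i \<and> j \<in> S t w}" for t i j
  have os_in: "os t w \<in> S t w" if t: "1 \<le> t" and w: "w \<in> space M" for t w
  proof -
    obtain x where x: "x \<in> S t w" using S_sub[OF t w] by auto
    have xK: "x \<in> {1..K}" using S_sub[OF t w] x by auto
    have "\<sigma> ` {1..K} = {1..K}" using ord unfolding is_ordering_def bij_betw_def by auto
    then obtain i where i: "i \<in> {1..K}" "\<sigma> i = x" using xK by (metis imageE)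
    have "\<exists>i. i \<in> {1..K} \<and> \<sigma> i \<in> S t w" using i x by auto
    from LeastI_ex[OF this] show ?thesis unfolding os_def ord_sel_def by simp
  qed
  have k_K: "k t w \<in> {1..K}" if "1 \<le> t" "w \<in> space M" for t w
    using k_in[OF that] S_sub[OF that] by auto
  have os_K: "os t w \<in> {1..K}" if "1 \<le> t" "w \<in> space M" for t w
    using os_in[OF that] S_sub[OF that] by auto
  have evS: "{w\<in>space M. P (S t w)} \<in> sets (F t)" if t: "1 \<le> t" for t P
  proof -
    have "S t -` {X. P X} \<inter> space (F t) \<in> sets (F t)"
      by (rule measurable_sets[OF S_adapt[OF t]]) simp
    moreover have "{w\<in>space M. P (S t w)} = S t -` {X. P X} \<inter> space (F t)" using sp[OF t] by auto
    ultimately show ?thesis by simp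
  qed
  have evk: "{w\<in>space M. P (k t w)} \<in> sets (F t)" if t: "1 \<le> t" for t P
  proof -
    have "k t -` {X. P X} \<inter> space (F t) \<in> sets (F t)"
      by (rule measurable_sets[OF k_adapt[OF t]]) simp
    moreover have "{w\<in>space M. P (k t w)} = k t -` {X. P X} \<inter> space (F t)" using sp[OF t] by auto
    ultimately show ?thesis by simp
  qed
  have kAF: "kA t a \<in> sets (F t)" if "1 \<le> t" for t a
    unfolding kA_def by (rule evk[OF that])
  have oAF: "oA t a \<in> sets (F t)" if "1 \<le> t" for t a
    unfolding oA_def os_def by (rule evS[OF that])
  have BF: "B t i j \<in> sets (F t)" if "1 \<le> t" for t i j
  proof -
    have "B t i j = {w\<in>space M. k t w = i} \<inter> {w\<in>space M. j \<in> S t w}" unfolding B_def by auto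
    then show ?thesis using evk[OF that] evS[OF that] by auto
  qed
  have indkA: "indicator (kA t a) w = (if a = k t w then 1 else (0::real))" if "w \<in> space M" for t a w
    using that by (auto simp: kA_def indicator_def)
  have indoA: "indicator (oA t a) w = (if a = os t w then 1 else (0::real))" if "w \<in> space M" for t a w
    using that by (auto simp: oA_def indicator_def)
  have evM: "A \<in> sets M" if "1 \<le> t" "A \<in> sets (F t)" for t A using ss[OF that(1)] that(2) by auto
  have iI: "integrable M (indicator A :: 'w \<Rightarrow> real)" if "A \<in> sets M" for A
    using that by (simp add: emeasure_eq_measure)
  have II: "integrable M (\<lambda>w. L t w a * indicator A w)"
    if "t \<in> {1..T}" "a \<in> {1..K}" "A \<in> sets (F t)" for t a A
    using key[of t a A] that by auto
  have IE: "(\<integral>w. L t w a * indicator A w \<partial>M) = \<mu> a * prob A"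
    if "t \<in> {1..T}" "a \<in> {1..K}" "A \<in> sets (F t)" for t a A
    using key[of t a A] that by auto
  have kAM: "kA t a \<in> sets M" if "1 \<le> t" for t a using evM[OF that kAF[OF that]] .
  have oAM: "oA t a \<in> sets M" if "1 \<le> t" for t a using evM[OF that oAF[OF that]] .
  have BM: "B t i j \<in> sets M" if "1 \<le> t" for t i j using evM[OF that BF[OF that]] .
  have intcI: "integrable M (\<lambda>w. c * indicator A w :: real)" if "A \<in> sets M" for c A
    using iI[OF that] by simp
  have intc: "(\<integral>w. c * indicator A w \<partial>M) = c * prob A" if "A \<in> sets M" for c :: real and A
    using that sets.sets_into_space[OF that] by (simp add: Int_absorb2)
  have kAs: "kA t a \<inter> space M = kA t a" for t a by (auto simp: kA_def)
  have oAs: "oA t a \<inter> space M = oA t a" for t a by (auto simp: oA_def)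
  have Bs: "B t i j \<inter> space M = B t i j" for t i j by (auto simp: B_def)
  have ORD: "(\<integral>w. ordering_regret K L S k T \<sigma> w \<partial>M)
      = (\<Sum>t=1..T. \<Sum>a\<in>{1..K}. \<mu> a * prob (kA t a) - \<mu> a * prob (oA t a))"
  proof -
    have "(\<integral>w. ordering_regret K L S k T \<sigma> w \<partial>M) = (\<integral>w. (\<Sum>t=1..T. \<Sum>a\<in>{1..K}.
        L t w a * indicator (kA t a) w - L t w a * indicator (oA t a) w) \<partial>M)"
    proof (rule Bochner_Integration.integral_cong[OF refl])
      fix w assume w: "w \<in> space M"
      have "L t w (k t w) - L t w (ord_sel K \<sigma> (S t w)) = (\<Sum>a\<in>{1..K}.
          L t w a * indicator (kA t a) w - L t w a * indicator (oA t a) w)" if t: "t \<in> {1..T}" for t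
      proof -
        have t1: "1 \<le> t" using t by auto
        have "(\<Sum>a\<in>{1..K}. L t w a * indicator (kA t a) w) = L t w (k t w)"
          unfolding indkA[OF w] by (rule sum_delta_real[OF _ k_K[OF t1 w]]) simp
        moreover have "(\<Sum>a\<in>{1..K}. L t w a * indicator (oA t a) w) = L t w (os t w)"
          unfolding indoA[OF w] by (rule sum_delta_real[OF _ os_K[OF t1 w]]) simp
        ultimately show ?thesis by (simp add: sum_subtractf os_def)
      qed
      then show "ordering_regret K L S k T \<sigma> w = (\<Sum>t=1..T. \<Sum>a\<in>{1..K}.
        L t w a * indicator (kA t a) w - L t w a * indicator (oA t a) w)"
        unfolding ordering_regret_def by (rule sum.cong[OF refl])
    qed
    also have "\<dots> = (\<Sum>t=1..T. (\<integral>w. (\<Sum>a\<in>{1..K}.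
        L t w a * indicator (kA t a) w - L t w a * indicator (oA t a) w) \<partial>M))"
      by (rule Bochner_Integration.integral_sum) (intro Bochner_Integration.integrable_sum Bochner_Integration.integrable_diff II kAF oAF; auto)
    also have "\<dots> = (\<Sum>t=1..T. \<Sum>a\<in>{1..K}. (\<integral>w.
        L t w a * indicator (kA t a) w - L t w a * indicator (oA t a) w \<partial>M))"
      by (intro sum.cong refl Bochner_Integration.integral_sum) (intro Bochner_Integration.integrable_sum Bochner_Integration.integrable_diff II kAF oAF; auto)
    also have "\<dots> = (\<Sum>t=1..T. \<Sum>a\<in>{1..K}. \<mu> a * prob (kA t a) - \<mu> a * prob (oA t a))"
    proof (intro sum.cong refl)
      fix t a assume t: "t \<in> {1..T}" and a: "a \<in> {1..K}"
      show "(\<integral>w. L t w a * indicator (kA t a) w - L t w a * indicator (oA t a) w \<partial>M)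
          = \<mu> a * prob (kA t a) - \<mu> a * prob (oA t a)"
        using t a by (subst Bochner_Integration.integral_diff) (auto intro!: II kAF oAF simp: IE kAF oAF)
    qed
    finally show ?thesis .
  qed
  have INT: "(\<integral>w. int_regret L S k T i j w \<partial>M)
      = (\<Sum>t=1..T. \<mu> i * prob (B t i j) - \<mu> j * prob (B t i j))"
    if i: "i \<in> {1..K}" and j: "j \<in> {1..K}" for i j
  proof -
    have "(\<integral>w. int_regret L S k T i j w \<partial>M) = (\<integral>w. (\<Sum>t=1..T.
        L t w i * indicator (B t i j) w - L t w j * indicator (B t i j) w) \<partial>M)"
      unfolding int_regret_def
      by (rule Bochner_Integration.integral_cong[OF refl], rule sum.cong[OF refl]) (auto simp: B_def indicator_def)
    also have "\<dots> = (\<Sum>t=1..T. \<mu> i * prob (B t i j) - \<mu> j * prob (B t i j))"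
    proof -
      have "(\<integral>w. (\<Sum>t=1..T. L t w i * indicator (B t i j) w - L t w j * indicator (B t i j) w) \<partial>M)
        = (\<Sum>t=1..T. (\<integral>w. L t w i * indicator (B t i j) w - L t w j * indicator (B t i j) w \<partial>M))"
        by (rule Bochner_Integration.integral_sum) (intro Bochner_Integration.integrable_diff II BF; use i j in auto)
      also have "\<dots> = (\<Sum>t=1..T. \<mu> i * prob (B t i j) - \<mu> j * prob (B t i j))"
      proof (intro sum.cong refl)
        fix t assume t: "t \<in> {1..T}"
        show "(\<integral>w. L t w i * indicator (B t i j) w - L t w j * indicator (B t i j) w \<partial>M)
          = \<mu> i * prob (B t i j) - \<mu> j * prob (B t i j)"
          using t i j by (subst Bochner_Integration.integral_diff) (auto intro!: II BF simp: IE BF)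
      qed
      finally show ?thesis .
    qed
    finally show ?thesis .
  qed
  have PT: "(\<Sum>a\<in>{1..K}. \<mu> a * prob (kA t a) - \<mu> a * prob (oA t a))
      \<le> (\<Sum>i\<in>{1..K}. \<Sum>j\<in>{j\<in>{1..K}. \<mu> j \<le> \<mu> i}. \<mu> i * prob (B t i j) - \<mu> j * prob (B t i j))"
    if t: "t \<in> {1..T}" for t
  proof -
    have t1: "1 \<le> t" using t by auto
    have "(\<Sum>a\<in>{1..K}. \<mu> a * prob (kA t a) - \<mu> a * prob (oA t a))
        = (\<integral>w. (\<Sum>a\<in>{1..K}. \<mu> a * indicator (kA t a) w - \<mu> a * indicator (oA t a) w) \<partial>M)"
    proof -
      have "(\<integral>w. (\<Sum>a\<in>{1..K}. \<mu> a * indicator (kA t a) w - \<mu> a * indicator (oA t a) w) \<partial>M)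
        = (\<Sum>a\<in>{1..K}. (\<integral>w. \<mu> a * indicator (kA t a) w - \<mu> a * indicator (oA t a) w \<partial>M))"
        by (rule Bochner_Integration.integral_sum) (intro Bochner_Integration.integrable_diff intcI kAM oAM t1)
      also have "\<dots> = (\<Sum>a\<in>{1..K}. \<mu> a * prob (kA t a) - \<mu> a * prob (oA t a))"
        by (intro sum.cong refl, subst Bochner_Integration.integral_diff)
           (intro intcI kAM oAM t1, intro intcI kAM oAM t1, simp add: kAs oAs)
      finally show ?thesis by simp
    qed
    also have "\<dots> \<le> (\<integral>w. (\<Sum>i\<in>{1..K}. \<Sum>j\<in>{j\<in>{1..K}. \<mu> j \<le> \<mu> i}.
          \<mu> i * indicator (B t i j) w - \<mu> j * indicator (B t i j) w) \<partial>M)"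
    proof (rule Bochner_Integration.integral_mono)
      show "integrable M (\<lambda>w. \<Sum>a\<in>{1..K}. \<mu> a * indicator (kA t a) w - \<mu> a * indicator (oA t a) w)"
        by (intro Bochner_Integration.integrable_sum Bochner_Integration.integrable_diff intcI kAM oAM t1)
      show "integrable M (\<lambda>w. \<Sum>i\<in>{1..K}. \<Sum>j\<in>{j\<in>{1..K}. \<mu> j \<le> \<mu> i}.
          \<mu> i * indicator (B t i j) w - \<mu> j * indicator (B t i j) w)"
        by (intro Bochner_Integration.integrable_sum Bochner_Integration.integrable_diff intcI BM t1)
      fix w assume w: "w \<in> space M"
      let ?kk = "k t w" and ?oo = "os t w"
      have "(\<Sum>a\<in>{1..K}. \<mu> a * indicator (kA t a) w - \<mu> a * indicator (oA t a) w)
          = (\<Sum>a\<in>{1..K}. \<mu> a * indicator (kA t a) w) - (\<Sum>a\<in>{1..K}. \<mu> a * indicator (oA t a) w)"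
        by (simp add: sum_subtractf)
      also have "\<dots> = \<mu> ?kk - \<mu> ?oo"
        unfolding indkA[OF w] indoA[OF w]
        using sum_delta_real[OF _ k_K[OF t1 w], of \<mu>] sum_delta_real[OF _ os_K[OF t1 w], of \<mu>]
        by simp
      finally have lhs: "(\<Sum>a\<in>{1..K}. \<mu> a * indicator (kA t a) w - \<mu> a * indicator (oA t a) w)
          = \<mu> ?kk - \<mu> ?oo" .
      define g where "g i j = \<mu> i * indicator (B t i j) w - \<mu> j * indicator (B t i j) w" for i j
      have gnn: "0 \<le> g i j" if "j \<in> {j\<in>{1..K}. \<mu> j \<le> \<mu> i}" for i j
        using that by (auto simp: g_def indicator_def)
      have snn: "0 \<le> (\<Sum>j\<in>{j\<in>{1..K}. \<mu> j \<le> \<mu> i}. g i j)" for i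
        by (rule sum_nonneg) (rule gnn)
      have "\<mu> ?kk - \<mu> ?oo \<le> (\<Sum>i\<in>{1..K}. \<Sum>j\<in>{j\<in>{1..K}. \<mu> j \<le> \<mu> i}. g i j)"
      proof (cases "\<mu> ?oo \<le> \<mu> ?kk")
        case True
        have "\<mu> ?kk - \<mu> ?oo = g ?kk ?oo"
          using os_in[OF t1 w] w by (simp add: g_def B_def indicator_def)
        also have "\<dots> \<le> (\<Sum>j\<in>{j\<in>{1..K}. \<mu> j \<le> \<mu> ?kk}. g ?kk j)"
          by (rule member_le_sum) (use True os_K[OF t1 w] gnn in auto)
        also have "\<dots> \<le> (\<Sum>i\<in>{1..K}. \<Sum>j\<in>{j\<in>{1..K}. \<mu> j \<le> \<mu> i}. g i j)"
          by (rule member_le_sum[where f="\<lambda>i. \<Sum>j\<in>{j\<in>{1..K}. \<mu> j \<le> \<mu> i}. g i j"])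
             (use k_K[OF t1 w] snn in auto)
        finally show ?thesis .
      next
        case False
        then have "\<mu> ?kk - \<mu> ?oo \<le> 0" by simp
        also have "0 \<le> (\<Sum>i\<in>{1..K}. \<Sum>j\<in>{j\<in>{1..K}. \<mu> j \<le> \<mu> i}. g i j)"
          by (rule sum_nonneg) (rule snn)
        finally show ?thesis .
      qed
      then show "(\<Sum>a\<in>{1..K}. \<mu> a * indicator (kA t a) w - \<mu> a * indicator (oA t a) w)
          \<le> (\<Sum>i\<in>{1..K}. \<Sum>j\<in>{j\<in>{1..K}. \<mu> j \<le> \<mu> i}.
          \<mu> i * indicator (B t i j) w - \<mu> j * indicator (B t i j) w)"
        using lhs by (simp add: g_def)
    qed
    also have "\<dots> = (\<Sum>i\<in>{1..K}. \<Sum>j\<in>{j\<in>{1..K}. \<mu> j \<le> \<mu> i}. \<mu> i * prob (B t i j) - \<mu> j * prob (B t i j))"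
    proof -
      have "(\<integral>w. (\<Sum>i\<in>{1..K}. \<Sum>j\<in>{j\<in>{1..K}. \<mu> j \<le> \<mu> i}.
          \<mu> i * indicator (B t i j) w - \<mu> j * indicator (B t i j) w) \<partial>M)
        = (\<Sum>i\<in>{1..K}. (\<integral>w. (\<Sum>j\<in>{j\<in>{1..K}. \<mu> j \<le> \<mu> i}.
          \<mu> i * indicator (B t i j) w - \<mu> j * indicator (B t i j) w) \<partial>M))"
        by (rule Bochner_Integration.integral_sum)
           (intro Bochner_Integration.integrable_sum Bochner_Integration.integrable_diff intcI BM t1)
      also have "\<dots> = (\<Sum>i\<in>{1..K}. \<Sum>j\<in>{j\<in>{1..K}. \<mu> j \<le> \<mu> i}. (\<integral>w.
          \<mu> i * indicator (B t i j) w - \<mu> j * indicator (B t i j) w \<partial>M))"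
        by (intro sum.cong refl Bochner_Integration.integral_sum)
           (intro Bochner_Integration.integrable_diff intcI BM t1)
      also have "\<dots> = (\<Sum>i\<in>{1..K}. \<Sum>j\<in>{j\<in>{1..K}. \<mu> j \<le> \<mu> i}. \<mu> i * prob (B t i j) - \<mu> j * prob (B t i j))"
        by (intro sum.cong refl, subst Bochner_Integration.integral_diff)
           (intro intcI BM t1, intro intcI BM t1, simp add: Bs)
      finally show ?thesis .
    qed
    finally show ?thesis .
  qed
  have "(\<integral>w. ordering_regret K L S k T \<sigma> w \<partial>M)
      \<le> (\<Sum>t=1..T. \<Sum>i\<in>{1..K}. \<Sum>j\<in>{j\<in>{1..K}. \<mu> j \<le> \<mu> i}. \<mu> i * prob (B t i j) - \<mu> j * prob (B t i j))"
    unfolding ORD by (rule sum_mono) (rule PT)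
  also have "\<dots> = (\<Sum>i\<in>{1..K}. \<Sum>j\<in>{j\<in>{1..K}. \<mu> j \<le> \<mu> i}. \<Sum>t=1..T. \<mu> i * prob (B t i j) - \<mu> j * prob (B t i j))"
    by (rule trans[OF sum.swap], rule sum.cong[OF refl], rule sum.swap)
  also have "\<dots> = (\<Sum>i\<in>{1..K}. \<Sum>j\<in>{j\<in>{1..K}. \<mu> j \<le> \<mu> i}. (\<integral>w. int_regret L S k T i j w \<partial>M))"
    by (intro sum.cong refl) (simp add: INT)
  finally show ?thesis .
qed


end
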